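(* Let $m\ge 2$, $d_1,\dots,d_m\ge 2$, and let $\rho$ be a density matrix on $\mathbb{C}^{d_1}\otimes\cdots\otimes\mathbb{C}^{d_m}$. For each $i=1,\dots,m$ let $\mathcal{P}^{(i)}=\{P^{(i)}_j\}_{j=1}^{d_i^2}$ be a general SIC-POVM on $\mathbb{C}^{d_i}$ with parameter $a_i$. Let $d=\min\{d_1^2,\dots,d_m^2\}$ and define $$J(\rho)=\max_{\sigma_1,\dots,\sigma_m}\sum_{j=1}^{d}\mathrm{Tr}\Big[\Big(\bigotimes_{i=1}^m P^{(i)}_{\sigma_i(j)}\Big)\rho\Big],$$ where the maximum runs over all tuples of injective maps $\sigma_i:\{1,\dots,d\}\to\{1,\dots,d_i^2\}$, $i=1,\dots,m$. If $\rho$ is fully separable, then $$J(\rho)\le \min_{1\le i\neq k\le m}\sqrt{\frac{a_id_i^2+1}{d_i(d_i+1)}}\,\sqrt{\frac{a_kd_k^2+1}{d_k(d_k+1)}}.$$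
   Context: A general SIC-POVM on $\mathbb{C}^{n}$ with parameter $a$ is a set of $n^2$ positive semidefinite operators $\{P_\alpha\}_{\alpha=1}^{n^2}$ on $\mathbb{C}^{n}$ such that $\sum_{\alpha=1}^{n^2}P_\alpha=I$, $\mathrm{Tr}(P_\alpha^2)=a$ for all $\alpha$, and $\mathrm{Tr}(P_\alpha P_\beta)=\frac{1-na}{n(n^2-1)}$ for all $\alpha\neq\beta$; here $\frac{1}{n^3}<a\le\frac{1}{n^2}$. A density matrix on $\mathbb{C}^{d_1}\otimes\cdots\otimes\mathbb{C}^{d_m}$ is fully separable if it is a convex combination of product states $\rho_1\otimes\cdots\otimes\rho_m$. *)

theory Defs
  imports "Jordan_Normal_Form.Matrix" "HOL-Library.FuncSet"
begin

(* Kronecker (tensor) product of complex matrices; the first factor is the outermost one *)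
definition kron :: "complex mat \<Rightarrow> complex mat \<Rightarrow> complex mat" where
  "kron A B = mat (dim_row A * dim_row B) (dim_col A * dim_col B)
     (\<lambda>(i, j). A $$ (i div dim_row B, j div dim_col B) * B $$ (i mod dim_row B, j mod dim_col B))"

fun kron_list :: "complex mat list \<Rightarrow> complex mat" where
  "kron_list [] = 1\<^sub>m 1"
| "kron_list (A # As) = kron A (kron_list As)"

definition trace :: "complex mat \<Rightarrow> complex" where
  "trace A = (\<Sum>i<dim_row A. A $$ (i, i))"

definition psd :: "nat \<Rightarrow> complex mat \<Rightarrow> bool" where
  "psd n A \<longleftrightarrow> A \<in> carrier_mat n n \<and>
     (\<forall>v \<in> carrier_vec n. let q = (\<Sum>i<n. cnj (v $ i) * (A *\<^sub>v v) $ i) in Im q = 0 \<and> Re q \<ge> 0)"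

definition density_matrix :: "nat \<Rightarrow> complex mat \<Rightarrow> bool" where
  "density_matrix n \<rho> \<longleftrightarrow> psd n \<rho> \<and> trace \<rho> = 1"

definition general_sic_povm :: "nat \<Rightarrow> real \<Rightarrow> (nat \<Rightarrow> complex mat) \<Rightarrow> bool" where
  "general_sic_povm n a P \<longleftrightarrow>
     1 / real n ^ 3 < a \<and> a \<le> 1 / real n ^ 2 \<and>
     (\<forall>\<alpha> < n^2. psd n (P \<alpha>)) \<and>
     foldr (+) (map P [0..<n^2]) (0\<^sub>m n n) = 1\<^sub>m n \<and>
     (\<forall>\<alpha> < n^2. trace (P \<alpha> * P \<alpha>) = complex_of_real a) \<and>
     (\<forall>\<alpha> < n^2. \<forall>\<beta> < n^2. \<alpha> \<noteq> \<beta> \<longrightarrow>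
        trace (P \<alpha> * P \<beta>) = complex_of_real ((1 - real n * a) / (real n * (real n ^ 2 - 1))))"

definition fully_separable :: "nat \<Rightarrow> (nat \<Rightarrow> nat) \<Rightarrow> complex mat \<Rightarrow> bool" where
  "fully_separable m d \<rho> \<longleftrightarrow>
     (\<exists>K (p :: nat \<Rightarrow> real) (\<sigma> :: nat \<Rightarrow> nat \<Rightarrow> complex mat).
        (\<forall>k<K. p k \<ge> 0) \<and> (\<Sum>k<K. p k) = 1 \<and>
        (\<forall>k<K. \<forall>i<m. density_matrix (d i) (\<sigma> k i)) \<and>
        \<rho> = foldr (+) (map (\<lambda>k. complex_of_real (p k) \<cdot>\<^sub>m kron_list (map (\<sigma> k) [0..<m])) [0..<K])
              (0\<^sub>m (\<Prod>i<m. d i) (\<Prod>i<m. d i)))"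

definition min_sq_dim :: "nat \<Rightarrow> (nat \<Rightarrow> nat) \<Rightarrow> nat" where
  "min_sq_dim m d = Min {d i ^ 2 | i. i < m}"

definition inj_tuples :: "nat \<Rightarrow> (nat \<Rightarrow> nat) \<Rightarrow> (nat \<Rightarrow> nat \<Rightarrow> nat) set" where
  "inj_tuples m d = (\<Pi>\<^sub>E i\<in>{..<m}. {s \<in> {..<min_sq_dim m d} \<rightarrow>\<^sub>E {..<d i ^ 2}. inj_on s {..<min_sq_dim m d}})"

(* J(\<rho>); the traces are real for PSD arguments, we take real parts *)
definition J_val :: "nat \<Rightarrow> (nat \<Rightarrow> nat) \<Rightarrow> (nat \<Rightarrow> nat \<Rightarrow> complex mat) \<Rightarrow> complex mat \<Rightarrow> real" where
  "J_val m d P \<rho> = Max ((\<lambda>\<sigma>. Re (\<Sum>j<min_sq_dim m d.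
       trace (kron_list (map (\<lambda>i. P i (\<sigma> i j)) [0..<m]) * \<rho>))) ` inj_tuples m d)"

end

theory Submission
  imports Defs "HOL-Analysis.L2_Norm"
begin


lemma sum_div_mod:
  "(\<Sum>k<a*(b::nat). f (k div b) (k mod b)) = (\<Sum>i<a. \<Sum>j<b. (f i j :: 'c::comm_monoid_add))"
proof (cases "b = 0")
  case True then show ?thesis by simp
next
  case False
  have "(\<Sum>i<a. \<Sum>j<b. f i j) = (\<Sum>(i,j)\<in>{..<a}\<times>{..<b}. f i j)"
    by (simp add: sum.cartesian_product)
  also have "\<dots> = (\<Sum>k<a*b. f (k div b) (k mod b))"
  proof (rule sum.reindex_bij_witness[of _ "\<lambda>k. (k div b, k mod b)" "\<lambda>(i,j). i*b+j"])
    fix k assume "k \<in> {..<a*b}"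
    then show "(\<lambda>(i,j). i*b+j) (k div b, k mod b) = k" by simp
    show "(k div b, k mod b) \<in> {..<a}\<times>{..<b}" using \<open>k \<in> {..<a*b}\<close> False
      by (auto simp: less_mult_imp_div_less)
  next
    fix p assume p: "p \<in> {..<a}\<times>{..<b}"
    obtain i j where pij: "p = (i,j)" by force
    with p have ij: "i < a" "j < b" by auto
    then show "(case p of (i,j) \<Rightarrow> i*b+j) \<in> {..<a*b}" using pij
    proof -
      have "i*b+j < (i+1)*b" using ij by simp
      also have "\<dots> \<le> a*b" using ij by (intro mult_le_mono1) simp
      finally show ?thesis using pij by simp
    qed
    show "((case p of (i,j) \<Rightarrow> i*b+j) div b, (case p of (i,j) \<Rightarrow> i*b+j) mod b) = p"
      using pij ij by simp
    show "f ((case p of (i,j) \<Rightarrow> i*b+j) div b) ((case p of (i,j) \<Rightarrow> i*b+j) mod b) = (case p of (i,j) \<Rightarrow> f i j)"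
      using pij ij by simp
  qed
  finally show ?thesis by simp
qed

lemma kron_carrier[simp]: "dim_row (kron A B) = dim_row A * dim_row B" "dim_col (kron A B) = dim_col A * dim_col B"
  by (auto simp: kron_def)

lemma kron_index: "i < dim_row A * dim_row B \<Longrightarrow> j < dim_col A * dim_col B \<Longrightarrow>
   kron A B $$ (i,j) = A $$ (i div dim_row B, j div dim_col B) * B $$ (i mod dim_row B, j mod dim_col B)"
  by (simp add: kron_def)

lemma kron_mult:
  assumes A: "A \<in> carrier_mat a1 a2" and C: "C \<in> carrier_mat a2 a3"
    and B: "B \<in> carrier_mat b1 b2" and D: "D \<in> carrier_mat b2 b3"
  shows "kron A B * kron C D = kron (A*C) (B*D)"
proof (rule eq_matI)
  show "dim_row (kron A B * kron C D) = dim_row (kron (A * C) (B * D))" using A B C D by simp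
  show "dim_col (kron A B * kron C D) = dim_col (kron (A * C) (B * D))" using A B C D by simp
  fix i j assume i: "i < dim_row (kron (A * C) (B * D))" and j: "j < dim_col (kron (A * C) (B * D))"
  have i': "i < a1*b1" and j': "j < a3*b3" using i j A B C D by auto
  have b1: "b1 > 0" and b3: "b3 > 0" using i' j' by (auto intro: Nat.gr0I)
  have idiv: "i div b1 < a1" "i mod b1 < b1" "j div b3 < a3" "j mod b3 < b3"
    using i' j' b1 b3 by (auto simp: less_mult_imp_div_less)
  have "(kron A B * kron C D) $$ (i,j) = (\<Sum>k<a2*b2. kron A B $$ (i,k) * kron C D $$ (k,j))"
    using A B C D i' j' by (simp add: scalar_prod_def atLeast0LessThan)
  also have "\<dots> = (\<Sum>k<a2*b2. (A $$ (i div b1, k div b2) * B $$ (i mod b1, k mod b2)) *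
       (C $$ (k div b2, j div b3) * D $$ (k mod b2, j mod b3)))"
    using A B C D i' j' by (intro sum.cong refl) (simp add: kron_index)
  also have "\<dots> = (\<Sum>k1<a2. \<Sum>k2<b2. (A $$ (i div b1, k1) * B $$ (i mod b1, k2)) *
       (C $$ (k1, j div b3) * D $$ (k2, j mod b3)))"
    by (rule sum_div_mod)
  also have "\<dots> = (\<Sum>k1<a2. A $$ (i div b1, k1) * C $$ (k1, j div b3)) * (\<Sum>k2<b2. B $$ (i mod b1, k2) * D $$ (k2, j mod b3))"
    by (simp add: sum_product mult_ac)
  also have "\<dots> = kron (A*C) (B*D) $$ (i,j)"
    using A B C D i' j' idiv by (simp add: kron_index scalar_prod_def atLeast0LessThan)
  finally show "(kron A B * kron C D) $$ (i,j) = kron (A*C) (B*D) $$ (i,j)" .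
qed

lemma trace_kron:
  assumes A: "A \<in> carrier_mat n n" and B: "B \<in> carrier_mat p p"
  shows "trace (kron A B) = trace A * trace B"
proof -
  have "trace (kron A B) = (\<Sum>k<n*p. A $$ (k div p, k div p) * B $$ (k mod p, k mod p))"
    unfolding trace_def using A B by (intro sum.cong) (auto simp: kron_index)
  also have "\<dots> = (\<Sum>i<n. \<Sum>j<p. A $$ (i,i) * B $$ (j,j))" by (rule sum_div_mod)
  also have "\<dots> = trace A * trace B" using A B by (simp add: trace_def sum_product)
  finally show ?thesis .
qed


lemma kron_list_carrier:
  "(\<forall>i\<in>set xs. f i \<in> carrier_mat (d i) (d i)) \<Longrightarrow>
   kron_list (map f xs) \<in> carrier_mat (prod_list (map d xs)) (prod_list (map d xs))"
proof (induction xs)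
  case Nil then show ?case by simp
next
  case (Cons x xs)
  then have "kron_list (map f xs) \<in> carrier_mat (prod_list (map d xs)) (prod_list (map d xs))"
    "f x \<in> carrier_mat (d x) (d x)" by auto
  then show ?case by (intro carrier_matI) (auto simp: carrier_matD)
qed

lemma trace_kron_list:
  "(\<forall>i\<in>set xs. f i \<in> carrier_mat (d i) (d i) \<and> g i \<in> carrier_mat (d i) (d i)) \<Longrightarrow>
   trace (kron_list (map f xs) * kron_list (map g xs)) = prod_list (map (\<lambda>i. trace (f i * g i)) xs)"
proof (induction xs)
  case Nil
  then show ?case by (simp add: trace_def)
next
  case (Cons x xs)
  have f: "f x \<in> carrier_mat (d x) (d x)" and g: "g x \<in> carrier_mat (d x) (d x)" using Cons.prems by auto
  have K1: "kron_list (map f xs) \<in> carrier_mat (prod_list (map d xs)) (prod_list (map d xs))"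
    using Cons.prems by (intro kron_list_carrier) auto
  have K2: "kron_list (map g xs) \<in> carrier_mat (prod_list (map d xs)) (prod_list (map d xs))"
    using Cons.prems by (intro kron_list_carrier) auto
  have "trace (kron_list (map f (x#xs)) * kron_list (map g (x#xs))) =
        trace (kron (f x * g x) (kron_list (map f xs) * kron_list (map g xs)))"
    using kron_mult[OF f g K1 K2] by simp
  also have "\<dots> = trace (f x * g x) * trace (kron_list (map f xs) * kron_list (map g xs))"
    using f g K1 K2 by (intro trace_kron) auto
  finally show ?case using Cons.IH Cons.prems by simp
qed

lemma trace_add: "A \<in> carrier_mat n n \<Longrightarrow> B \<in> carrier_mat n n \<Longrightarrow> trace (A + B) = trace A + trace B"
  by (simp add: trace_def sum.distrib)

lemma trace_smult: "A \<in> carrier_mat n n \<Longrightarrow> trace (c \<cdot>\<^sub>m A) = c * trace A"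
  by (simp add: trace_def sum_distrib_left)

lemma foldr_carrier:
  "(\<forall>k\<in>set ks. F k \<in> carrier_mat n n) \<Longrightarrow> foldr (+) (map F ks) (0\<^sub>m n n) \<in> carrier_mat n n"
  by (induction ks) auto

lemma trace_foldr_right:
  assumes X: "X \<in> carrier_mat n n"
  shows "(\<forall>k\<in>set ks. F k \<in> carrier_mat n n) \<Longrightarrow>
     trace (X * foldr (+) (map F ks) (0\<^sub>m n n)) = (\<Sum>k\<leftarrow>ks. trace (X * F k))"
proof (induction ks)
  case Nil
  then show ?case using X by (simp add: trace_def)
next
  case (Cons k ks)
  have Fk: "F k \<in> carrier_mat n n" and R: "foldr (+) (map F ks) (0\<^sub>m n n) \<in> carrier_mat n n"
    using Cons.prems foldr_carrier[of ks F n] by auto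
  have "X * (F k + foldr (+) (map F ks) (0\<^sub>m n n)) = X * F k + X * foldr (+) (map F ks) (0\<^sub>m n n)"
    using X Fk R by (simp add: mult_add_distrib_mat)
  then show ?case using Cons.IH Cons.prems X Fk R by (simp add: trace_add[of _ n] mult_carrier_mat)
qed

lemma trace_foldr_left:
  assumes X: "X \<in> carrier_mat n n"
  shows "(\<forall>k\<in>set ks. F k \<in> carrier_mat n n) \<Longrightarrow>
     trace (foldr (+) (map F ks) (0\<^sub>m n n) * X) = (\<Sum>k\<leftarrow>ks. trace (F k * X))"
proof (induction ks)
  case Nil
  then show ?case using X by (simp add: trace_def)
next
  case (Cons k ks)
  have Fk: "F k \<in> carrier_mat n n" and R: "foldr (+) (map F ks) (0\<^sub>m n n) \<in> carrier_mat n n"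
    using Cons.prems foldr_carrier[of ks F n] by auto
  have "(F k + foldr (+) (map F ks) (0\<^sub>m n n)) * X = F k * X + foldr (+) (map F ks) (0\<^sub>m n n) * X"
    using X Fk R by (simp add: add_mult_distrib_mat)
  then show ?case using Cons.IH Cons.prems X Fk R by (simp add: trace_add[of _ n] mult_carrier_mat)
qed



definition qff :: "nat \<Rightarrow> (nat \<Rightarrow> nat \<Rightarrow> complex) \<Rightarrow> (nat \<Rightarrow> complex) \<Rightarrow> complex" where
  "qff n F x = (\<Sum>i<n. cnj (x i) * (\<Sum>j<n. F i j * x j))"

definition posf :: "nat \<Rightarrow> (nat \<Rightarrow> nat \<Rightarrow> complex) \<Rightarrow> bool" where
  "posf n F \<longleftrightarrow> (\<forall>x. Im (qff n F x) = 0 \<and> Re (qff n F x) \<ge> 0)"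

definition hermf :: "nat \<Rightarrow> (nat \<Rightarrow> nat \<Rightarrow> complex) \<Rightarrow> bool" where
  "hermf n F \<longleftrightarrow> (\<forall>i<n. \<forall>j<n. F j i = cnj (F i j))"

lemma sum_delta_r: "finite A \<Longrightarrow> (\<Sum>j\<in>A. f j * (if j = i then c else 0)) = (if i \<in> A then f i * c else (0::complex))"
proof -
  assume "finite A"
  have "(\<Sum>j\<in>A. f j * (if j = i then c else 0)) = (\<Sum>j\<in>A. if j = i then f i * c else 0)"
    by (intro sum.cong) auto
  then show ?thesis using \<open>finite A\<close> by simp
qed

lemma sum_delta_l: "finite A \<Longrightarrow> (\<Sum>j\<in>A. (if j = i then c else 0) * f j) = (if i \<in> A then c * f i else (0::complex))"
proof -
  assume "finite A"
  have "(\<Sum>j\<in>A. (if j = i then c else 0) * f j) = (\<Sum>j\<in>A. if j = i then c * f i else 0)"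
    by (intro sum.cong) auto
  then show ?thesis using \<open>finite A\<close> by simp
qed

lemma cnj_if: "cnj (if P then 1 else 0) = (if P then 1 else 0)" by simp

lemma qff_expand:
  assumes s: "s < n"
  shows "qff n F (\<lambda>k. x k + (if k = s then t else 0)) =
    qff n F x + cnj t * (\<Sum>j<n. F s j * x j) + t * (\<Sum>i<n. cnj (x i) * F i s) + cnj t * t * F s s"
proof -
  have inner: "(\<Sum>j<n. F i j * (x j + (if j = s then t else 0))) = (\<Sum>j<n. F i j * x j) + F i s * t" for i
    using s by (simp add: distrib_left sum.distrib sum_delta_r)
  have "qff n F (\<lambda>k. x k + (if k = s then t else 0)) =
     (\<Sum>i<n. (cnj (x i) + (if i = s then cnj t else 0)) * ((\<Sum>j<n. F i j * x j) + F i s * t))"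
    unfolding qff_def inner by (intro sum.cong) auto
  also have "\<dots> = (\<Sum>i<n. cnj (x i) * (\<Sum>j<n. F i j * x j)) + (\<Sum>i<n. cnj (x i) * F i s) * t
      + cnj t * ((\<Sum>j<n. F s j * x j) + F s s * t)"
    using s by (simp add: distrib_right distrib_left sum.distrib sum_delta_l sum_distrib_right mult.assoc)
  finally show ?thesis unfolding qff_def by (simp add: distrib_left mult.commute mult.left_commute add.assoc add.left_commute)
qed

lemma qff_delta: "i < n \<Longrightarrow> qff n F (\<lambda>k. if k = i then 1 else 0) = F i i"
  unfolding qff_def by (simp add: sum_delta_r sum_delta_l cnj_if)

lemma posf_herm:
  assumes P: "posf n F" shows "hermf n F"
  unfolding hermf_def
proof (intro allI impI)
  fix i j assume i: "i < n" and j: "j < n"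
  let ?e = "\<lambda>k. if k = i then 1 else (0::complex)"
  have ex: "qff n F (\<lambda>k. ?e k + (if k = j then t else 0)) = F i i + cnj t * F j i + t * F i j + cnj t * t * F j j" for t
    using qff_expand[OF j, of F ?e t] qff_delta[OF i, of F] i
    by (simp add: sum_delta_r sum_delta_l cnj_if)
  have q: "Im (qff n F x) = 0" for x using P unfolding posf_def by blast
  have ii: "Im (F i i) = 0" using q[of "?e"] unfolding qff_delta[OF i, of F] .
  have jj: "Im (F j j) = 0" using q[of "\<lambda>k. if k = j then 1 else 0"] unfolding qff_delta[OF j, of F] .
  have t1: "Im (F i i + cnj 1 * F j i + 1 * F i j + cnj 1 * 1 * F j j) = 0"
    using q[of "\<lambda>k. ?e k + (if k = j then 1 else 0)"] unfolding ex .
  have t2: "Im (F i i + cnj \<i> * F j i + \<i> * F i j + cnj \<i> * \<i> * F j j) = 0"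
    using q[of "\<lambda>k. ?e k + (if k = j then \<i> else 0)"] unfolding ex .
  show "F j i = cnj (F i j)"
    using t1 t2 ii jj by (simp add: complex_eq_iff)
qed

lemma posf_real_ineq:
  fixes q a b \<alpha> :: real
  assumes H: "\<And>u v. 0 \<le> q + 2*(u*a + v*b) + \<alpha>*(u^2+v^2)" and q: "q \<ge> 0" and al: "\<alpha> \<ge> 0"
  shows "a^2 + b^2 \<le> \<alpha> * q"
proof (cases "\<alpha> = 0")
  case True
  show ?thesis
  proof (rule ccontr)
    assume "\<not> ?thesis"
    then have pos: "a^2 + b^2 > 0" using True q by simp
    define r where "r = (q+1) / (2*(a^2+b^2))"
    have "0 \<le> q + 2*((-r*a)*a + (-r*b)*b)" using H[of "-r*a" "-r*b"] True by simp
    also have "\<dots> = q - 2*r*(a^2+b^2)" by (simp add: algebra_simps power2_eq_square)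
    also have "2*r*(a^2+b^2) = q+1" using pos unfolding r_def by (simp add: field_simps)
    finally show False by simp
  qed
next
  case False
  then have al': "\<alpha> > 0" using al by simp
  have "0 \<le> q + 2*((-a/\<alpha>)*a + (-b/\<alpha>)*b) + \<alpha>*((-a/\<alpha>)^2+(-b/\<alpha>)^2)" by (rule H)
  also have "\<dots> = q - (a^2+b^2)/\<alpha>" using al' by (simp add: field_simps power2_eq_square)
  finally have "(a^2+b^2)/\<alpha> \<le> q" by simp
  then show ?thesis using al' by (simp add: field_simps mult.commute)
qed

lemma re_expand: "Re (Q + cnj (Complex u v) * y + (Complex u v) * cnj y + cnj (Complex u v) * (Complex u v) * complex_of_real al) = Re Q + 2*(u*Re y + v*Im y) + al*(u^2+v^2)"
  by (simp add: power2_eq_square algebra_simps)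

lemma posf_bound:
  assumes P: "posf n F" and s: "s < n"
  shows "(cmod (\<Sum>j<n. F s j * x j))^2 \<le> Re (F s s) * Re (qff n F x)"
proof -
  have H: "hermf n F" by (rule posf_herm[OF P])
  define y where "y = (\<Sum>j<n. F s j * x j)"
  have cy: "(\<Sum>i<n. cnj (x i) * F i s) = cnj y"
  proof -
    have "cnj y = (\<Sum>i<n. cnj (F s i) * cnj (x i))" unfolding y_def by (simp add: cnj_sum)
    also have "\<dots> = (\<Sum>i<n. cnj (x i) * F i s)"
    proof (rule sum.cong)
      fix i assume "i \<in> {..<n}"
      then have "F i s = cnj (F s i)" using H s unfolding hermf_def by blast
      then show "cnj (F s i) * cnj (x i) = cnj (x i) * F i s" by (simp add: mult.commute)
    qed simp
    finally show ?thesis by simp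
  qed
  have Fss: "F s s = complex_of_real (Re (F s s))"
  proof -
    have e: "F s s = cnj (F s s)" using H s unfolding hermf_def by blast
    have "Im (F s s) = 0" using arg_cong[OF e, of Im] by simp
    then show ?thesis by (simp add: complex_eq_iff)
  qed
  have q: "Im (qff n F x) = 0" "Re (qff n F x) \<ge> 0" using P unfolding posf_def by auto
  have "0 \<le> Re (qff n F x) + 2*(u*Re y + v*Im y) + Re (F s s)*(u^2+v^2)" for u v
  proof -
    have "0 \<le> Re (qff n F (\<lambda>k. x k + (if k = s then Complex u v else 0)))" using P unfolding posf_def by blast
    also have "\<dots> = Re (qff n F x) + 2*(u*Re y + v*Im y) + Re (F s s)*(u^2+v^2)"
      unfolding qff_expand[OF s, of F x] cy y_def[symmetric]
      by (subst Fss, rule re_expand)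
    finally show ?thesis .
  qed
  moreover have "Re (F s s) \<ge> 0"
  proof -
    have "Re (qff n F (\<lambda>k. if k = s then 1 else 0)) \<ge> 0" using P unfolding posf_def by blast
    then show ?thesis unfolding qff_delta[OF s, of F] .
  qed
  ultimately have "(Re y)^2 + (Im y)^2 \<le> Re (F s s) * Re (qff n F x)"
    using q by (intro posf_real_ineq) auto
  then show ?thesis unfolding y_def[symmetric] by (simp add: cmod_power2)
qed

lemma posf_entry:
  assumes P: "posf n F" and s: "s < n" and j: "j < n"
  shows "(cmod (F s j))^2 \<le> Re (F s s) * Re (F j j)"
  using posf_bound[OF P s, of "\<lambda>k. if k = j then 1 else 0"] qff_delta[OF j, of F] j
  by (simp add: sum_delta_r)



definition tr2 :: "nat \<Rightarrow> (nat \<Rightarrow> nat \<Rightarrow> complex) \<Rightarrow> (nat \<Rightarrow> nat \<Rightarrow> complex) \<Rightarrow> complex" where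
  "tr2 n F B = (\<Sum>i<n. \<Sum>j<n. F i j * B j i)"

lemma qff_rank1_sub:
  "qff n (\<lambda>i j. F i j - u i * cnj (u j)) x = qff n F x - cnj (\<Sum>j<n. cnj (u j) * x j) * (\<Sum>j<n. cnj (u j) * x j)"
proof -
  define w where "w = (\<Sum>j<n. cnj (u j) * x j)"
  have "qff n (\<lambda>i j. F i j - u i * cnj (u j)) x = (\<Sum>i<n. cnj (x i) * ((\<Sum>j<n. F i j * x j) - u i * w))"
    unfolding qff_def w_def
    by (intro sum.cong refl arg_cong2[where f="(*)"]) (simp_all add: left_diff_distrib sum_subtractf sum_distrib_left mult.assoc)
  also have "\<dots> = qff n F x - (\<Sum>i<n. cnj (x i) * u i) * w"
    unfolding qff_def by (simp add: right_diff_distrib sum_subtractf sum_distrib_right mult.assoc)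
  also have "(\<Sum>i<n. cnj (x i) * u i) = cnj w" unfolding w_def by (simp add: cnj_sum mult.commute)
  finally show ?thesis unfolding w_def .
qed

lemma tr2_rank1_sub:
  "tr2 n (\<lambda>i j. F i j - u i * cnj (u j)) B = tr2 n F B - qff n B u"
proof -
  have "tr2 n (\<lambda>i j. F i j - u i * cnj (u j)) B = tr2 n F B - (\<Sum>i<n. \<Sum>j<n. u i * cnj (u j) * B j i)"
    unfolding tr2_def by (simp add: left_diff_distrib sum_subtractf)
  also have "(\<Sum>i<n. \<Sum>j<n. u i * cnj (u j) * B j i) = qff n B u"
    unfolding qff_def by (subst sum.swap) (simp add: sum_distrib_left mult_ac)
  finally show ?thesis .
qed

lemma tr2_nonneg_aux:
  assumes B: "posf n B"
  shows "n - s = k \<Longrightarrow> posf n F \<Longrightarrow> (\<forall>i<n. \<forall>j<n. (i < s \<or> j < s) \<longrightarrow> F i j = 0) \<Longrightarrow>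
     Im (tr2 n F B) = 0 \<and> Re (tr2 n F B) \<ge> 0"
proof (induction k arbitrary: s F)
  case 0
  then have "tr2 n F B = 0" unfolding tr2_def by (intro sum.neutral ballI) auto
  then show ?case by simp
next
  case (Suc k)
  have s: "s < n" and k: "n - Suc s = k" using Suc.prems(1) by auto
  have P: "posf n F" and Z: "\<forall>i<n. \<forall>j<n. (i < s \<or> j < s) \<longrightarrow> F i j = 0" using Suc.prems by auto
  have H: "hermf n F" by (rule posf_herm[OF P])
  define \<alpha> where "\<alpha> = Re (F s s)"
  have al0: "\<alpha> \<ge> 0" unfolding \<alpha>_def
  proof -
    have "Re (qff n F (\<lambda>k. if k = s then 1 else 0)) \<ge> 0" using P unfolding posf_def by blast
    then show "Re (F s s) \<ge> 0" unfolding qff_delta[OF s, of F] .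
  qed
  have Fss: "F s s = complex_of_real \<alpha>"
  proof -
    have e: "F s s = cnj (F s s)" using H s unfolding hermf_def by blast
    have "Im (F s s) = 0" using arg_cong[OF e, of Im] by simp
    then show ?thesis unfolding \<alpha>_def by (simp add: complex_eq_iff)
  qed
  show ?case
  proof (cases "\<alpha> = 0")
    case True
    have row: "F s j = 0" if "j < n" for j
      using posf_entry[OF P s that] True unfolding \<alpha>_def by simp
    have col: "F j s = 0" if "j < n" for j
    proof -
      have "F j s = cnj (F s j)" using H s that unfolding hermf_def by blast
      then show ?thesis using row[OF that] by simp
    qed
    have Z': "\<forall>i<n. \<forall>j<n. (i < Suc s \<or> j < Suc s) \<longrightarrow> F i j = 0"
      using Z row col by (metis less_Suc_eq)
    show ?thesis by (rule Suc.IH[OF k P Z'])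
  next
    case False
    then have alp: "\<alpha> > 0" using al0 by simp
    define c where "c = complex_of_real (sqrt \<alpha>)"
    have c0: "c \<noteq> 0" using alp unfolding c_def by simp
    have cc: "cnj c = c" unfolding c_def by simp
    have csq: "c * c = complex_of_real \<alpha>"
    proof -
      have "sqrt \<alpha> * sqrt \<alpha> = \<alpha>" using alp by simp
      then show ?thesis unfolding c_def of_real_mult[symmetric] by simp
    qed
    define u where "u = (\<lambda>k. F k s / c)"
    define G where "G = (\<lambda>i j. F i j - u i * cnj (u j))"
    have cu: "cnj (u j) = F s j / c" if "j < n" for j
    proof -
      have "F s j = cnj (F j s)" using H s that unfolding hermf_def by blast
      then show ?thesis using cc unfolding u_def by simp
    qed
    have PG: "posf n G" unfolding posf_def
    proof
      fix x
      define y where "y = (\<Sum>j<n. F s j * x j)"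
      have w: "(\<Sum>j<n. cnj (u j) * x j) = y / c"
      proof -
        have "(\<Sum>j<n. cnj (u j) * x j) = (\<Sum>j<n. F s j * x j / c)"
          by (intro sum.cong refl) (simp add: cu)
        then show ?thesis unfolding y_def by (simp add: sum_divide_distrib)
      qed
      have ww: "cnj (y / c) * (y / c) = complex_of_real ((cmod y)^2 / \<alpha>)"
      proof -
        have "cnj (y / c) * (y / c) = (y * cnj y) / (c * c)" using cc by (simp add: mult.commute)
        also have "y * cnj y = complex_of_real ((cmod y)^2)" by (simp only: complex_norm_square)
        finally show ?thesis unfolding csq by simp
      qed
      have qG: "qff n G x = qff n F x - complex_of_real ((cmod y)^2 / \<alpha>)"
        unfolding G_def qff_rank1_sub w ww ..
      have bd: "(cmod y)^2 \<le> \<alpha> * Re (qff n F x)" using posf_bound[OF P s, of x] unfolding y_def \<alpha>_def .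
      have "Im (qff n F x) = 0" "Re (qff n F x) \<ge> 0" using P unfolding posf_def by auto
      moreover have "(cmod y)^2 / \<alpha> \<le> Re (qff n F x)" using bd alp by (simp add: field_simps mult.commute)
      ultimately show "Im (qff n G x) = 0 \<and> 0 \<le> Re (qff n G x)" unfolding qG by simp
    qed
    have ZG: "\<forall>i<n. \<forall>j<n. (i < Suc s \<or> j < Suc s) \<longrightarrow> G i j = 0"
    proof (intro allI impI)
      fix i j assume i: "i < n" and j: "j < n" and ij: "i < Suc s \<or> j < Suc s"
      have us: "u s = c" unfolding u_def using Fss csq c0 by (simp add: field_simps)
      show "G i j = 0"
      proof (cases "i < s \<or> j < s")
        case True
        then show ?thesis
        proof
          assume "i < s" then have "F i j = 0" "u i = 0" using Z i j s unfolding u_def by auto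
          then show ?thesis unfolding G_def by simp
        next
          assume "j < s" then have "F i j = 0" "cnj (u j) = 0" using Z i j s unfolding u_def by auto
          then show ?thesis unfolding G_def by simp
        qed
      next
        case False
        then have "i = s \<or> j = s" using ij by auto
        then show ?thesis
        proof
          assume "i = s"
          then show ?thesis unfolding G_def using us cu[OF j] c0 by simp
        next
          assume "j = s"
          then show ?thesis unfolding G_def using us cc c0 unfolding u_def by simp
        qed
      qed
    qed
    have IH: "Im (tr2 n G B) = 0 \<and> Re (tr2 n G B) \<ge> 0" by (rule Suc.IH[OF k PG ZG])
    have "tr2 n G B = tr2 n F B - qff n B u" unfolding G_def by (rule tr2_rank1_sub)
    then have "tr2 n F B = tr2 n G B + qff n B u" by simp
    moreover have "Im (qff n B u) = 0" "Re (qff n B u) \<ge> 0" using B unfolding posf_def by auto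
    ultimately show ?thesis using IH by simp
  qed
qed

lemma tr2_nonneg:
  assumes "posf n F" "posf n B"
  shows "Im (tr2 n F B) = 0" "Re (tr2 n F B) \<ge> 0"
  using tr2_nonneg_aux[OF assms(2), of 0 n F] assms(1) by auto



lemma psd_posf:
  assumes "psd n A" shows "posf n (\<lambda>i j. A $$ (i,j))"
  unfolding posf_def
proof
  fix x :: "nat \<Rightarrow> complex"
  have A: "A \<in> carrier_mat n n" using assms unfolding psd_def by auto
  define v where "v = vec n x"
  have v: "v \<in> carrier_vec n" unfolding v_def by simp
  have "(\<Sum>i<n. cnj (v $ i) * (A *\<^sub>v v) $ i) = qff n (\<lambda>i j. A $$ (i,j)) x"
    unfolding qff_def
  proof (intro sum.cong refl)
    fix i assume i: "i \<in> {..<n}"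
    have "(A *\<^sub>v v) $ i = (\<Sum>j<n. A $$ (i,j) * x j)"
      using A i v by (simp add: v_def scalar_prod_def atLeast0LessThan)
    then show "cnj (v $ i) * (A *\<^sub>v v) $ i = cnj (x i) * (\<Sum>j<n. A $$ (i, j) * x j)"
      using i by (simp add: v_def)
  qed
  then show "Im (qff n (\<lambda>i j. A $$ (i,j)) x) = 0 \<and> 0 \<le> Re (qff n (\<lambda>i j. A $$ (i,j)) x)"
    using assms v unfolding psd_def Let_def by metis
qed

lemma trace_mult_tr2:
  assumes "A \<in> carrier_mat n n" "B \<in> carrier_mat n n"
  shows "trace (A * B) = tr2 n (\<lambda>i j. A $$ (i,j)) (\<lambda>i j. B $$ (i,j))"
proof -
  have d: "dim_row A = n" "dim_col A = n" "dim_row B = n" "dim_col B = n" using assms by auto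
  show ?thesis unfolding trace_def tr2_def
  proof (intro sum.cong)
    show "{..<dim_row (A * B)} = {..<n}" using d by simp
  next
    fix i assume i: "i \<in> {..<n}"
    have "(A * B) $$ (i,i) = row A i \<bullet> col B i" using i d by simp
    also have "\<dots> = (\<Sum>j<n. A $$ (i,j) * B $$ (j,i))"
      unfolding scalar_prod_def using i d by (simp add: atLeast0LessThan)
    finally show "(A * B) $$ (i,i) = (\<Sum>j<n. A $$ (i,j) * B $$ (j,i))" .
  qed
qed

lemma bessel:
  fixes w :: "'b \<Rightarrow> 'i \<Rightarrow> complex" and r :: "'i \<Rightarrow> complex"
  assumes I: "finite I" and A: "finite A" and N: "N > 0"
    and orth: "\<And>\<alpha> \<beta>. \<alpha> \<in> A \<Longrightarrow> \<beta> \<in> A \<Longrightarrow> (\<Sum>i\<in>I. w \<alpha> i * cnj (w \<beta> i)) = (if \<alpha> = \<beta> then complex_of_real N else 0)"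
  shows "(\<Sum>\<alpha>\<in>A. (cmod (\<Sum>i\<in>I. cnj (w \<alpha> i) * r i))^2) \<le> N * (\<Sum>i\<in>I. (cmod (r i))^2)"
proof -
  define g where "g \<alpha> = (\<Sum>i\<in>I. cnj (w \<alpha> i) * r i)" for \<alpha>
  define c where "c \<alpha> = g \<alpha> / complex_of_real N" for \<alpha>
  define z where "z i = (\<Sum>\<alpha>\<in>A. c \<alpha> * w \<alpha> i)" for i
  define C where "C = (\<Sum>\<alpha>\<in>A. c \<alpha> * cnj (c \<alpha>))"
  have rz: "(\<Sum>i\<in>I. r i * cnj (z i)) = complex_of_real N * C"
  proof -
    have "(\<Sum>i\<in>I. r i * cnj (z i)) = (\<Sum>\<alpha>\<in>A. cnj (c \<alpha>) * g \<alpha>)"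
      unfolding z_def g_def
      by (simp add: cnj_sum sum_distrib_left sum_distrib_right mult_ac) (rule sum.swap)
    also have "\<dots> = (\<Sum>\<alpha>\<in>A. complex_of_real N * (c \<alpha> * cnj (c \<alpha>)))"
      using N by (intro sum.cong refl) (simp add: c_def field_simps)
    finally show ?thesis unfolding C_def by (simp add: sum_distrib_left)
  qed
  have zr: "(\<Sum>i\<in>I. z i * cnj (r i)) = complex_of_real N * C"
  proof -
    have "(\<Sum>i\<in>I. z i * cnj (r i)) = cnj (\<Sum>i\<in>I. r i * cnj (z i))" by (simp add: cnj_sum mult.commute)
    also have "\<dots> = complex_of_real N * C"
      unfolding rz C_def by (simp add: cnj_sum mult.commute)
    finally show ?thesis .
  qed
  have zz: "(\<Sum>i\<in>I. z i * cnj (z i)) = complex_of_real N * C"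
  proof -
    have "(\<Sum>i\<in>I. z i * cnj (z i)) = (\<Sum>\<alpha>\<in>A. \<Sum>\<beta>\<in>A. c \<alpha> * cnj (c \<beta>) * (\<Sum>i\<in>I. w \<alpha> i * cnj (w \<beta> i)))"
      unfolding z_def
      by (simp add: cnj_sum sum_distrib_left sum_distrib_right mult_ac) (subst sum.swap, simp add: sum.swap[of _ I])
    also have "\<dots> = (\<Sum>\<alpha>\<in>A. \<Sum>\<beta>\<in>A. if \<alpha> = \<beta> then complex_of_real N * (c \<alpha> * cnj (c \<alpha>)) else 0)"
      by (intro sum.cong refl) (simp add: orth)
    also have "\<dots> = complex_of_real N * C" using A unfolding C_def by (simp add: sum_distrib_left)
    finally show ?thesis .
  qed
  have nn: "0 \<le> (\<Sum>i\<in>I. (cmod (r i - z i))^2)" by (intro sum_nonneg) simp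
  have "complex_of_real (\<Sum>i\<in>I. (cmod (r i - z i))^2) = (\<Sum>i\<in>I. (r i - z i) * cnj (r i - z i))"
    by (simp only: of_real_sum complex_norm_square)
  also have "\<dots> = (\<Sum>i\<in>I. r i * cnj (r i)) - (\<Sum>i\<in>I. r i * cnj (z i)) - (\<Sum>i\<in>I. z i * cnj (r i)) + (\<Sum>i\<in>I. z i * cnj (z i))"
    by (simp add: algebra_simps sum.distrib sum_subtractf)
  also have "\<dots> = complex_of_real (\<Sum>i\<in>I. (cmod (r i))^2) - complex_of_real N * C"
    unfolding rz zr zz of_real_sum complex_norm_square by simp
  finally have e1: "complex_of_real (\<Sum>i\<in>I. (cmod (r i - z i))^2) = complex_of_real (\<Sum>i\<in>I. (cmod (r i))^2) - complex_of_real N * C" .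
  have Creal: "C = complex_of_real (\<Sum>\<alpha>\<in>A. (cmod (c \<alpha>))^2)"
    unfolding C_def by (simp only: of_real_sum complex_norm_square)
  have key: "N * (\<Sum>\<alpha>\<in>A. (cmod (c \<alpha>))^2) \<le> (\<Sum>i\<in>I. (cmod (r i))^2)"
  proof -
    have "complex_of_real (\<Sum>i\<in>I. (cmod (r i - z i))^2) = complex_of_real ((\<Sum>i\<in>I. (cmod (r i))^2) - N * (\<Sum>\<alpha>\<in>A. (cmod (c \<alpha>))^2))"
      using e1 unfolding Creal of_real_diff of_real_mult .
    then have "(\<Sum>i\<in>I. (cmod (r i - z i))^2) = (\<Sum>i\<in>I. (cmod (r i))^2) - N * (\<Sum>\<alpha>\<in>A. (cmod (c \<alpha>))^2)"
      by (simp only: of_real_eq_iff)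
    then show ?thesis using nn by linarith
  qed
  have "(\<Sum>\<alpha>\<in>A. (cmod (g \<alpha>))^2) = N^2 * (\<Sum>\<alpha>\<in>A. (cmod (c \<alpha>))^2)"
    unfolding c_def using N by (simp add: sum_distrib_left norm_divide power_divide field_simps)
  also have "\<dots> = N * (N * (\<Sum>\<alpha>\<in>A. (cmod (c \<alpha>))^2))" by (simp add: power2_eq_square)
  also have "\<dots> \<le> N * (\<Sum>i\<in>I. (cmod (r i))^2)" using key N by simp
  finally show ?thesis unfolding g_def .
qed



lemma sum_pairs_w:
  fixes F G :: "nat \<Rightarrow> nat \<Rightarrow> complex" and t :: real
  shows "(\<Sum>p\<in>{..<n}\<times>{..<n}. (F (fst p) (snd p) - (if fst p = snd p then complex_of_real t else 0)) *
            (G (snd p) (fst p) - (if fst p = snd p then complex_of_real t else 0)))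
       = tr2 n F G - t * (\<Sum>i<n. F i i) - t * (\<Sum>i<n. G i i) + t^2 * n"
proof -
  have "(\<Sum>p\<in>{..<n}\<times>{..<n}. (F (fst p) (snd p) - (if fst p = snd p then complex_of_real t else 0)) *
            (G (snd p) (fst p) - (if fst p = snd p then complex_of_real t else 0)))
     = (\<Sum>i<n. \<Sum>j<n. (F i j - (if i = j then complex_of_real t else 0)) * (G j i - (if i = j then complex_of_real t else 0)))"
    by (simp add: sum.cartesian_product split_def)
  also have "\<dots> = (\<Sum>i<n. \<Sum>j<n. F i j * G j i - (if j = i then t * F i i else 0) - (if j = i then t * G i i else 0) + (if j = i then complex_of_real (t^2) else 0))"
    by (intro sum.cong refl) (auto simp: algebra_simps power2_eq_square)
  also have "\<dots> = tr2 n F G - t * (\<Sum>i<n. F i i) - t * (\<Sum>i<n. G i i) + t^2 * n"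
    unfolding tr2_def by (simp add: sum.distrib sum_subtractf sum_distrib_left)
  finally show ?thesis .
qed

lemma sum_pairs_r:
  fixes G H :: "nat \<Rightarrow> nat \<Rightarrow> complex" and t :: real
  shows "(\<Sum>p\<in>{..<n}\<times>{..<n}. (G (snd p) (fst p) - (if fst p = snd p then complex_of_real t else 0)) * H (fst p) (snd p))
       = tr2 n G H - t * (\<Sum>i<n. H i i)"
proof -
  have "(\<Sum>p\<in>{..<n}\<times>{..<n}. (G (snd p) (fst p) - (if fst p = snd p then complex_of_real t else 0)) * H (fst p) (snd p))
      = (\<Sum>i<n. \<Sum>j<n. (G j i - (if i = j then complex_of_real t else 0)) * H i j)"
    by (simp add: sum.cartesian_product split_def)
  also have "\<dots> = (\<Sum>i<n. \<Sum>j<n. G j i * H i j - (if j = i then t * H i i else 0))"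
    by (intro sum.cong refl) (auto simp: algebra_simps)
  also have "\<dots> = (\<Sum>j<n. \<Sum>i<n. G j i * H i j) - t * (\<Sum>i<n. H i i)"
    by (simp add: sum_subtractf sum_distrib_left) (rule sum.swap)
  finally show ?thesis unfolding tr2_def .
qed



lemma sum_list_upt0: "sum_list (map f [0..<N]) = sum f {..<N}"
  by (simp add: sum_set_upt_conv_sum_list_nat[symmetric] atLeast0LessThan)

lemma prod_list_upt0: "prod_list (map f [0..<N]) = prod f {..<N}"
  by (metis atLeast0LessThan prod.set_conv_list distinct_upt set_upt prod.distinct_set_conv_list)

lemma sum_if_eq: "\<alpha> < N \<Longrightarrow> (\<Sum>\<beta><N. (if \<beta> = \<alpha> then x else y)) = x + (real N - 1) * (y::real)"
proof -
  assume a: "\<alpha> < N"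
  have "(\<Sum>\<beta><N. (if \<beta> = \<alpha> then x else y)) = (\<Sum>\<beta><N. y + (if \<beta> = \<alpha> then x - y else 0))"
    by (intro sum.cong) auto
  also have "\<dots> = N * y + (x - y)" using a by (simp add: sum.distrib)
  finally show ?thesis by (simp add: algebra_simps)
qed

lemma sic_facts:
  assumes n: "n \<ge> 2" and S: "general_sic_povm n a P" and R: "density_matrix n \<rho>"
  shows "\<forall>\<alpha><n^2. Im (trace (P \<alpha> * \<rho>)) = 0 \<and> Re (trace (P \<alpha> * \<rho>)) \<ge> 0"
    and "(\<Sum>\<alpha><n^2. Re (trace (P \<alpha> * \<rho>))) = 1"
    and "(\<Sum>\<alpha><n^2. (Re (trace (P \<alpha> * \<rho>)))^2) \<le> (a * real n ^ 2 + 1) / (real n * (real n + 1))"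
proof -
  define b where "b = (1 - real n * a) / (real n * (real n ^ 2 - 1))"
  have a1: "1 / real n ^ 3 < a" and a2: "a \<le> 1 / real n ^ 2"
    and Ppsd: "\<forall>\<alpha><n^2. psd n (P \<alpha>)"
    and Psum: "foldr (+) (map P [0..<n^2]) (0\<^sub>m n n) = 1\<^sub>m n"
    and Pa: "\<forall>\<alpha><n^2. trace (P \<alpha> * P \<alpha>) = complex_of_real a"
    and Pb: "\<forall>\<alpha><n^2. \<forall>\<beta><n^2. \<alpha> \<noteq> \<beta> \<longrightarrow> trace (P \<alpha> * P \<beta>) = complex_of_real b"
    using S unfolding general_sic_povm_def b_def by auto
  have Rpsd: "psd n \<rho>" and Rtr: "trace \<rho> = 1" using R unfolding density_matrix_def by auto
  have Rc: "\<rho> \<in> carrier_mat n n" using Rpsd unfolding psd_def by auto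
  have Pc: "P \<alpha> \<in> carrier_mat n n" if "\<alpha> < n^2" for \<alpha> using Ppsd that unfolding psd_def by auto
  have Pc': "\<forall>k\<in>set [0..<n^2]. P k \<in> carrier_mat n n" using Pc by auto
  have nr: "real n \<ge> 2" using n by simp
  show pos: "\<forall>\<alpha><n^2. Im (trace (P \<alpha> * \<rho>)) = 0 \<and> Re (trace (P \<alpha> * \<rho>)) \<ge> 0"
  proof (intro allI impI)
    fix \<alpha> assume a: "\<alpha> < n^2"
    have "trace (P \<alpha> * \<rho>) = tr2 n (\<lambda>i j. P \<alpha> $$ (i,j)) (\<lambda>i j. \<rho> $$ (i,j))"
      by (rule trace_mult_tr2[OF Pc[OF a] Rc])
    then show "Im (trace (P \<alpha> * \<rho>)) = 0 \<and> Re (trace (P \<alpha> * \<rho>)) \<ge> 0"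
      using tr2_nonneg[OF psd_posf[OF Ppsd[rule_format, OF a]] psd_posf[OF Rpsd]] by simp
  qed
  have sum1c: "(\<Sum>\<alpha><n^2. trace (P \<alpha> * \<rho>)) = 1"
  proof -
    have "trace (foldr (+) (map P [0..<n^2]) (0\<^sub>m n n) * \<rho>) = (\<Sum>k\<leftarrow>[0..<n^2]. trace (P k * \<rho>))"
      by (rule trace_foldr_left[OF Rc Pc'])
    then show ?thesis unfolding Psum using Rc Rtr by (simp add: sum_list_upt0)
  qed
  show sum1: "(\<Sum>\<alpha><n^2. Re (trace (P \<alpha> * \<rho>))) = 1"
    using arg_cong[OF sum1c, of Re] by (simp add: Re_sum)
  have trP: "trace (P \<alpha>) = complex_of_real (a + (real (n^2) - 1) * b)" if a: "\<alpha> < n^2" for \<alpha>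
  proof -
    have "trace (P \<alpha> * foldr (+) (map P [0..<n^2]) (0\<^sub>m n n)) = (\<Sum>k\<leftarrow>[0..<n^2]. trace (P \<alpha> * P k))"
      by (rule trace_foldr_right[OF Pc[OF a] Pc'])
    also have "\<dots> = (\<Sum>k<n^2. complex_of_real (if k = \<alpha> then a else b))"
      unfolding sum_list_upt0 using Pa Pb a by (intro sum.cong refl) auto
    also have "\<dots> = complex_of_real (a + (real (n^2) - 1) * b)"
      unfolding of_real_sum[symmetric] using sum_if_eq[OF a] by simp
    finally show ?thesis unfolding Psum using Pc[OF a] by simp
  qed
  have ab: "a + (real (n^2) - 1) * b = 1 / real n"
  proof -
    have "2 * 2 \<le> real n * real n" by (rule mult_mono) (use nr in auto)
    then have "real n ^ 2 - 1 \<noteq> 0" by (simp add: power2_eq_square)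
    then show ?thesis unfolding b_def using nr by (simp add: field_simps power2_eq_square)
  qed
  show "(\<Sum>\<alpha><n^2. (Re (trace (P \<alpha> * \<rho>)))^2) \<le> (a * real n ^ 2 + 1) / (real n * (real n + 1))"
  proof -
    have n4: "2 * 2 \<le> real n * real n" by (rule mult_mono) (use nr in auto)
    have nsq: "real n ^ 2 - 1 > 0" using n4 by (simp add: power2_eq_square)
    define D where "D = 1 / real n ^ 2 - real n * b"
    have nb: "real n * b = (1 - real n * a) / (real n ^ 2 - 1)"
    proof -
      have "real n * b = (real n * (1 - real n * a)) / (real n * (real n ^ 2 - 1))" unfolding b_def by simp
      also have "\<dots> = (1 - real n * a) / (real n ^ 2 - 1)" using nr by (subst mult_divide_mult_cancel_left) auto
      finally show ?thesis .
    qed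
    have na: "real n * a > 1 / real n ^ 2"
    proof -
      have "real n * (1 / real n ^ 3) < real n * a" using a1 nr by (intro mult_strict_left_mono) auto
      moreover have "real n * (1 / real n ^ 3) = 1 / real n ^ 2" using nr
        by (simp add: power3_eq_cube power2_eq_square)
      ultimately show ?thesis by simp
    qed
    have nbl: "real n * b < 1 / real n ^ 2"
    proof -
      have "1 - real n * a < 1 - 1 / real n ^ 2" using na by simp
      also have "\<dots> = (real n ^ 2 - 1) / real n ^ 2" using nr by (simp add: field_simps)
      finally have "(1 - real n * a) / (real n ^ 2 - 1) < 1 / real n ^ 2" using nsq by (simp add: field_simps)
      then show ?thesis unfolding nb .
    qed
    have D0: "D \<ge> 0" using nbl unfolding D_def by simp
    define s where "s = sqrt D"
    have ss: "s * s = D" unfolding s_def using D0 by simp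
    define t where "t = (1 / real n - s) / real n"
    have teq: "real n * t^2 - 2 * t / real n + b = 0"
    proof -
      have "real n * t^2 - 2 * t / real n = ((1 / real n - s)^2 - 2 * (1 / real n - s) / real n) / real n"
        unfolding t_def using nr by (simp add: field_simps power2_eq_square)
      also have "(1 / real n - s)^2 - 2 * (1 / real n - s) / real n = s * s - 1 / real n ^ 2"
        using nr by (simp add: field_simps power2_eq_square)
      also have "\<dots> = - real n * b" unfolding ss D_def by simp
      finally show ?thesis using nr by simp
    qed
    define N where "N = a - b"
    have Npos: "N > 0"
    proof -
      have "real n * b < real n * a"
      proof -
        show ?thesis using nbl na by simp
      qed
      then show ?thesis unfolding N_def using nr by simp
    qed
    define x where "x \<alpha> = trace (P \<alpha> * \<rho>)" for \<alpha>
    define w where "w \<alpha> p = P \<alpha> $$ (fst p, snd p) - (if fst p = snd p then complex_of_real t else 0)" for \<alpha> p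
    define r where "r p = \<rho> $$ (fst p, snd p)" for p
    have herm: "hermf n (\<lambda>i j. P \<alpha> $$ (i,j))" if "\<alpha> < n^2" for \<alpha>
      by (rule posf_herm[OF psd_posf[OF Ppsd[rule_format, OF that]]])
    have cw: "cnj (w \<alpha> p) = P \<alpha> $$ (snd p, fst p) - (if fst p = snd p then complex_of_real t else 0)"
      if "\<alpha> < n^2" "p \<in> {..<n}\<times>{..<n}" for \<alpha> p
    proof -
      have "P \<alpha> $$ (snd p, fst p) = cnj (P \<alpha> $$ (fst p, snd p))"
      proof -
        have "fst p < n" "snd p < n" using that(2) by auto
        then show ?thesis using herm[OF that(1)] unfolding hermf_def by blast
      qed
      then show ?thesis unfolding w_def by simp
    qed
    have trP': "(\<Sum>i<n. P \<alpha> $$ (i,i)) = complex_of_real (1 / real n)" if "\<alpha> < n^2" for \<alpha>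
      using trP[OF that] Pc[OF that] unfolding trace_def ab by simp
    have orth: "(\<Sum>p\<in>{..<n}\<times>{..<n}. w \<alpha> p * cnj (w \<beta> p)) = (if \<alpha> = \<beta> then complex_of_real N else 0)"
      if ab1: "\<alpha> \<in> {..<n^2}" "\<beta> \<in> {..<n^2}" for \<alpha> \<beta>
    proof -
      have "(\<Sum>p\<in>{..<n}\<times>{..<n}. w \<alpha> p * cnj (w \<beta> p)) =
          (\<Sum>p\<in>{..<n}\<times>{..<n}. (P \<alpha> $$ (fst p, snd p) - (if fst p = snd p then complex_of_real t else 0)) *
            (P \<beta> $$ (snd p, fst p) - (if fst p = snd p then complex_of_real t else 0)))"
        using cw ab1 unfolding w_def by (intro sum.cong refl) auto
      also have "\<dots> = tr2 n (\<lambda>i j. P \<alpha> $$ (i,j)) (\<lambda>i j. P \<beta> $$ (i,j)) - t * (\<Sum>i<n. P \<alpha> $$ (i,i)) - t * (\<Sum>i<n. P \<beta> $$ (i,i)) + t^2 * n"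
        by (rule sum_pairs_w)
      also have "\<dots> = trace (P \<alpha> * P \<beta>) - complex_of_real (2 * t / real n - real n * t^2)"
      proof -
        have a': "\<alpha> < n^2" "\<beta> < n^2" using ab1 by auto
        have e: "complex_of_real t * complex_of_real (1 / real n) + complex_of_real t * complex_of_real (1 / real n) - complex_of_real t ^ 2 * of_nat n
              = complex_of_real (2 * t / real n - real n * t^2)"
          by (simp add: field_simps power2_eq_square)
        show ?thesis unfolding trace_mult_tr2[OF Pc[OF a'(1)] Pc[OF a'(2)]] trP'[OF a'(1)] trP'[OF a'(2)] e[symmetric]
          by (simp add: algebra_simps)
      qed
      also have "\<dots> = (if \<alpha> = \<beta> then complex_of_real N else 0)"
      proof (cases "\<alpha> = \<beta>")
        case True
        then have "trace (P \<alpha> * P \<beta>) = complex_of_real a" using Pa ab1 by auto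
        moreover have "a - (2 * t / real n - real n * t^2) = N" unfolding N_def using teq by simp
        ultimately show ?thesis using True by (simp flip: of_real_diff)
      next
        case False
        then have "trace (P \<alpha> * P \<beta>) = complex_of_real b" using Pb ab1 by auto
        moreover have "b - (2 * t / real n - real n * t^2) = 0" using teq by simp
        ultimately show ?thesis using False by (simp flip: of_real_diff)
      qed
      finally show ?thesis .
    qed
    have inner: "(\<Sum>p\<in>{..<n}\<times>{..<n}. cnj (w \<alpha> p) * r p) = x \<alpha> - complex_of_real t" if a: "\<alpha> < n^2" for \<alpha>
    proof -
      have "(\<Sum>p\<in>{..<n}\<times>{..<n}. cnj (w \<alpha> p) * r p) =
        (\<Sum>p\<in>{..<n}\<times>{..<n}. (P \<alpha> $$ (snd p, fst p) - (if fst p = snd p then complex_of_real t else 0)) * \<rho> $$ (fst p, snd p))"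
        using cw a unfolding r_def by (intro sum.cong refl) auto
      also have "\<dots> = tr2 n (\<lambda>i j. P \<alpha> $$ (i,j)) (\<lambda>i j. \<rho> $$ (i,j)) - t * (\<Sum>i<n. \<rho> $$ (i,i))"
        by (rule sum_pairs_r)
      also have "\<dots> = x \<alpha> - complex_of_real t"
        unfolding x_def trace_mult_tr2[OF Pc[OF a] Rc]
        using Rtr Rc unfolding trace_def by simp
      finally show ?thesis .
    qed
    have rbound: "(\<Sum>p\<in>{..<n}\<times>{..<n}. (cmod (r p))^2) \<le> 1"
    proof -
      have PR: "posf n (\<lambda>i j. \<rho> $$ (i,j))" by (rule psd_posf[OF Rpsd])
      have "(\<Sum>p\<in>{..<n}\<times>{..<n}. (cmod (r p))^2) = (\<Sum>i<n. \<Sum>j<n. (cmod (\<rho> $$ (i,j)))^2)"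
        unfolding r_def by (simp add: sum.cartesian_product split_def)
      also have "\<dots> \<le> (\<Sum>i<n. \<Sum>j<n. Re (\<rho> $$ (i,i)) * Re (\<rho> $$ (j,j)))"
        by (intro sum_mono) (use posf_entry[OF PR] in auto)
      also have "\<dots> = (Re (trace \<rho>))^2"
        unfolding trace_def power2_eq_square using Rc by (simp add: Re_sum sum_product)
      finally show ?thesis using Rtr by simp
    qed
    have B: "(\<Sum>\<alpha>\<in>{..<n^2}. (cmod (\<Sum>p\<in>{..<n}\<times>{..<n}. cnj (w \<alpha> p) * r p))^2)
        \<le> N * (\<Sum>p\<in>{..<n}\<times>{..<n}. (cmod (r p))^2)"
      by (rule bessel[OF _ _ Npos orth]) auto
    also have "\<dots> \<le> N" using rbound Npos by (simp add: mult_left_le)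
    finally have B2: "(\<Sum>\<alpha><n^2. (Re (x \<alpha>) - t)^2) \<le> N"
    proof -
      assume h: "(\<Sum>\<alpha>\<in>{..<n^2}. (cmod (\<Sum>p\<in>{..<n}\<times>{..<n}. cnj (w \<alpha> p) * r p))^2) \<le> N"
      have "(\<Sum>\<alpha>\<in>{..<n^2}. (cmod (\<Sum>p\<in>{..<n}\<times>{..<n}. cnj (w \<alpha> p) * r p))^2) = (\<Sum>\<alpha><n^2. (Re (x \<alpha>) - t)^2)"
      proof (intro sum.cong refl)
        fix \<alpha> assume "\<alpha> \<in> {..<n^2}"
        then have a: "\<alpha> < n^2" by simp
        have "Im (x \<alpha>) = 0" using pos a unfolding x_def by auto
        then show "(cmod (\<Sum>p\<in>{..<n}\<times>{..<n}. cnj (w \<alpha> p) * r p))^2 = (Re (x \<alpha>) - t)^2"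
          unfolding inner[OF a] by (simp add: cmod_power2)
      qed
      then show ?thesis using h by simp
    qed
    have X1: "(\<Sum>\<alpha><n^2. Re (x \<alpha>)) = 1" using sum1 unfolding x_def .
    have "(\<Sum>\<alpha><n^2. (Re (x \<alpha>) - t)^2) = (\<Sum>\<alpha><n^2. (Re (x \<alpha>))^2) - 2 * t * (\<Sum>\<alpha><n^2. Re (x \<alpha>)) + real n ^ 2 * t^2"
      by (simp add: power2_diff sum.distrib sum_subtractf sum_distrib_left mult_ac)
    then have S: "(\<Sum>\<alpha><n^2. (Re (x \<alpha>))^2) \<le> N + 2 * t - real n ^ 2 * t^2"
      using B2 X1 by simp
    have "N + 2 * t - real n ^ 2 * t^2 = a + (real n - 1) * b"
    proof -
      have "real n ^ 2 * t^2 = real n * (real n * t^2)" by (simp add: power2_eq_square)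
      also have "real n * t^2 = 2 * t / real n - b" using teq by simp
      also have "real n * (2 * t / real n - b) = 2 * t - real n * b" using nr by (simp add: right_diff_distrib)
      finally have "real n ^ 2 * t^2 = 2 * t - real n * b" .
      then show ?thesis unfolding N_def by (simp add: algebra_simps)
    qed
    also have "\<dots> = (a * real n ^ 2 + 1) / (real n * (real n + 1))"
    proof -
      have "real n ^ 2 - 1 = (real n - 1) * (real n + 1)" by (simp add: algebra_simps power2_eq_square)
      then have "(real n - 1) * b = (1 - real n * a) / (real n * (real n + 1))"
        unfolding b_def using nr nsq by (simp add: field_simps)
      moreover have q: "real n * (real n + 1) \<noteq> 0" using nr by simp
      moreover have "a + (1 - real n * a) / (real n * (real n + 1)) = (a * (real n * (real n + 1)) + (1 - real n * a)) / (real n * (real n + 1))"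
        using q by (simp add: add_divide_eq_iff)
      moreover have "a * (real n * (real n + 1)) + (1 - real n * a) = a * real n ^ 2 + 1"
        by (simp add: algebra_simps power2_eq_square)
      ultimately show ?thesis by simp
    qed
    finally show ?thesis using S unfolding x_def by simp
  qed
qed



lemma prod_two_bound:
  fixes y :: "nat \<Rightarrow> real"
  assumes "i0 < m" "k0 < m" "i0 \<noteq> k0" "\<forall>i<m. 0 \<le> y i \<and> y i \<le> 1"
  shows "(\<Prod>i<m. y i) \<le> y i0 * y k0"
proof -
  have "(\<Prod>i<m. y i) = y i0 * (\<Prod>i\<in>{..<m} - {i0}. y i)"
    using assms by (subst prod.remove[of _ i0]) auto
  also have "(\<Prod>i\<in>{..<m} - {i0}. y i) = y k0 * (\<Prod>i\<in>{..<m} - {i0} - {k0}. y i)"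
    using assms by (subst prod.remove[of _ k0]) auto
  also have "(\<Prod>i\<in>{..<m} - {i0} - {k0}. y i) \<le> 1"
    using assms by (intro prod_le_1) auto
  finally show ?thesis
    using assms by (simp add: mult_left_le mult_nonneg_nonneg mult_left_mono)
qed

lemma sum_prod_bound:
  fixes y :: "nat \<Rightarrow> nat \<Rightarrow> real"
  assumes "i0 < m" "k0 < m" "i0 \<noteq> k0" "\<forall>i<m. \<forall>j<D. 0 \<le> y i j \<and> y i j \<le> 1"
    and C: "\<forall>i<m. (\<Sum>j<D. (y i j)^2) \<le> C i"
  shows "(\<Sum>j<D. \<Prod>i<m. y i j) \<le> sqrt (C i0) * sqrt (C k0)"
proof -
  have Cnn: "0 \<le> C i" if "i < m" for i
  proof -
    have "0 \<le> (\<Sum>j<D. (y i j)^2)" by (intro sum_nonneg) simp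
    then show ?thesis using C that by (meson order_trans)
  qed
  have "(\<Sum>j<D. \<Prod>i<m. y i j) \<le> (\<Sum>j<D. \<bar>y i0 j\<bar> * \<bar>y k0 j\<bar>)"
  proof (rule sum_mono)
    fix j assume "j \<in> {..<D}"
    then have "(\<Prod>i<m. y i j) \<le> y i0 j * y k0 j" using assms by (intro prod_two_bound) auto
    then show "(\<Prod>i<m. y i j) \<le> \<bar>y i0 j\<bar> * \<bar>y k0 j\<bar>" by (simp add: abs_mult[symmetric])
  qed
  also have "\<dots> \<le> L2_set (y i0) {..<D} * L2_set (y k0) {..<D}" by (rule L2_set_mult_ineq)
  also have "\<dots> \<le> sqrt (C i0) * sqrt (C k0)"
    unfolding L2_set_def using C assms(1,2) Cnn
    by (intro mult_mono real_sqrt_le_mono) (auto intro: sum_nonneg)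
  finally show ?thesis .
qed

lemma sum_inj_le:
  fixes h :: "nat \<Rightarrow> real"
  assumes "inj_on s {..<D}" "s \<in> {..<D} \<rightarrow> {..<N}" "\<forall>\<alpha><N. h \<alpha> \<ge> 0"
  shows "(\<Sum>j<D. h (s j)) \<le> (\<Sum>\<alpha><N. h \<alpha>)"
proof -
  have "(\<Sum>j<D. h (s j)) = (\<Sum>\<alpha>\<in>s ` {..<D}. h \<alpha>)" using assms(1) by (simp add: sum.reindex)
  also have "\<dots> \<le> (\<Sum>\<alpha><N. h \<alpha>)" using assms(2,3) by (intro sum_mono2) auto
  finally show ?thesis .
qed



theorem theorem4:
  fixes m :: nat and d :: "nat \<Rightarrow> nat" and a :: "nat \<Rightarrow> real"
    and P :: "nat \<Rightarrow> nat \<Rightarrow> complex mat" and \<rho> :: "complex mat"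
  assumes "m \<ge> 2"
    and "\<forall>i<m. d i \<ge> 2"
    and "density_matrix (\<Prod>i<m. d i) \<rho>"
    and "\<forall>i<m. general_sic_povm (d i) (a i) (P i)"
    and "fully_separable m d \<rho>"
  shows "J_val m d P \<rho> \<le>
    Min {sqrt ((a i * real (d i) ^ 2 + 1) / (real (d i) * (real (d i) + 1))) *
         sqrt ((a k * real (d k) ^ 2 + 1) / (real (d k) * (real (d k) + 1))) | i k. i < m \<and> k < m \<and> i \<noteq> k}"
proof -
  from assms(5) obtain K p R where
    pnn: "\<forall>k<K. p k \<ge> 0" and psum: "(\<Sum>k<K. p k) = 1"
    and Rdm: "\<forall>k<K. \<forall>i<m. density_matrix (d i) (R k i)"
    and rho: "\<rho> = foldr (+) (map (\<lambda>k. complex_of_real (p k) \<cdot>\<^sub>m kron_list (map (R k) [0..<m])) [0..<K])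
              (0\<^sub>m (\<Prod>i<m. d i) (\<Prod>i<m. d i))"
    unfolding fully_separable_def by blast
  define Dn where "Dn = (\<Prod>i<m. d i)"
  define D where "D = min_sq_dim m d"
  define c where "c i = (a i * real (d i) ^ 2 + 1) / (real (d i) * (real (d i) + 1))" for i
  have dprod: "prod_list (map d [0..<m]) = Dn" unfolding Dn_def by (rule prod_list_upt0)
  have Dle: "D \<le> d i ^ 2" if "i < m" for i
  proof -
    have e: "{d i ^ 2 | i. i < m} = (\<lambda>i. d i ^ 2) ` {..<m}" by auto
    show ?thesis unfolding D_def min_sq_dim_def e using that by (intro Min_le) auto
  qed
  have Rc: "R k i \<in> carrier_mat (d i) (d i)" if "k < K" "i < m" for k i
    using Rdm that unfolding density_matrix_def psd_def by auto
  have Pc: "P i \<alpha> \<in> carrier_mat (d i) (d i)" if "i < m" "\<alpha> < d i ^ 2" for i \<alpha>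
    using assms(4) that unfolding general_sic_povm_def psd_def by auto
  have facts: "(\<forall>\<alpha><d i ^ 2. Im (trace (P i \<alpha> * R k i)) = 0 \<and> Re (trace (P i \<alpha> * R k i)) \<ge> 0) \<and>
       (\<Sum>\<alpha><d i ^ 2. Re (trace (P i \<alpha> * R k i))) = 1 \<and>
       (\<Sum>\<alpha><d i ^ 2. (Re (trace (P i \<alpha> * R k i)))^2) \<le> c i" if "k < K" "i < m" for k i
    using sic_facts[of "d i" "a i" "P i" "R k i"] assms(2,4) Rdm that unfolding c_def by auto
  have bound: "J_val m d P \<rho> \<le> sqrt (c i0) * sqrt (c k0)" if ik: "i0 < m" "k0 < m" "i0 \<noteq> k0" for i0 k0
  proof -
    have fin: "finite (inj_tuples m d)" unfolding inj_tuples_def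
    proof (intro finite_PiE)
      show "finite {..<m}" by simp
    next
      fix i assume "i \<in> {..<m}"
      show "finite {s \<in> {..<min_sq_dim m d} \<rightarrow>\<^sub>E {..<(d i)\<^sup>2}. inj_on s {..<min_sq_dim m d}}"
        by (rule finite_subset[of _ "{..<min_sq_dim m d} \<rightarrow>\<^sub>E {..<(d i)\<^sup>2}"]) (auto intro: finite_PiE)
    qed
    have ne: "inj_tuples m d \<noteq> {}"
    proof -
      have "(\<lambda>i\<in>{..<m}. \<lambda>j\<in>{..<D}. j) \<in> inj_tuples m d"
        unfolding inj_tuples_def D_def[symmetric] using Dle
        by (auto simp: PiE_iff inj_on_def) (meson order_less_le_trans)
      then show ?thesis by blast
    qed
    show ?thesis unfolding J_val_def D_def[symmetric]
    proof (rule Max.boundedI)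
      show "finite ((\<lambda>\<sigma>. Re (\<Sum>j<D. trace (kron_list (map (\<lambda>i. P i (\<sigma> i j)) [0..<m]) * \<rho>))) ` inj_tuples m d)"
        using fin by simp
      show "(\<lambda>\<sigma>. Re (\<Sum>j<D. trace (kron_list (map (\<lambda>i. P i (\<sigma> i j)) [0..<m]) * \<rho>))) ` inj_tuples m d \<noteq> {}"
        using ne by simp
    next
      fix v assume "v \<in> (\<lambda>\<sigma>. Re (\<Sum>j<D. trace (kron_list (map (\<lambda>i. P i (\<sigma> i j)) [0..<m]) * \<rho>))) ` inj_tuples m d"
      then obtain \<sigma> where \<sigma>: "\<sigma> \<in> inj_tuples m d" and v: "v = Re (\<Sum>j<D. trace (kron_list (map (\<lambda>i. P i (\<sigma> i j)) [0..<m]) * \<rho>))"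
        by blast
      have \<sigma>i: "\<sigma> i \<in> {..<D} \<rightarrow>\<^sub>E {..<d i ^ 2}" "inj_on (\<sigma> i) {..<D}" if "i < m" for i
        using \<sigma> that unfolding inj_tuples_def D_def[symmetric] by auto
      have \<sigma>r: "\<sigma> i j < d i ^ 2" if "i < m" "j < D" for i j
        using \<sigma>i(1)[OF that(1)] that(2) by auto
      define y where "y k i j = Re (trace (P i (\<sigma> i j) * R k i))" for k i j
      have Kc: "kron_list (map (\<lambda>i. P i (\<sigma> i j)) [0..<m]) \<in> carrier_mat Dn Dn" if "j < D" for j
        using kron_list_carrier[of "[0..<m]" "\<lambda>i. P i (\<sigma> i j)" d] Pc \<sigma>r that unfolding dprod by auto
      have Rkc: "kron_list (map (R k) [0..<m]) \<in> carrier_mat Dn Dn" if "k < K" for k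
        using kron_list_carrier[of "[0..<m]" "R k" d] Rc that unfolding dprod by auto
      have tj: "trace (kron_list (map (\<lambda>i. P i (\<sigma> i j)) [0..<m]) * \<rho>) =
            complex_of_real (\<Sum>k<K. p k * (\<Prod>i<m. y k i j))" if j: "j < D" for j
      proof -
        have "trace (kron_list (map (\<lambda>i. P i (\<sigma> i j)) [0..<m]) * \<rho>) =
          (\<Sum>k\<leftarrow>[0..<K]. trace (kron_list (map (\<lambda>i. P i (\<sigma> i j)) [0..<m]) *
              (complex_of_real (p k) \<cdot>\<^sub>m kron_list (map (R k) [0..<m]))))"
          unfolding rho Dn_def[symmetric] using Kc[OF j] Rkc
          by (intro trace_foldr_right) auto
        also have "\<dots> = (\<Sum>k<K. complex_of_real (p k) * (\<Prod>i<m. trace (P i (\<sigma> i j) * R k i)))"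
          unfolding sum_list_upt0
        proof (intro sum.cong refl)
          fix k assume k: "k \<in> {..<K}"
          have "trace (kron_list (map (\<lambda>i. P i (\<sigma> i j)) [0..<m]) * (complex_of_real (p k) \<cdot>\<^sub>m kron_list (map (R k) [0..<m])))
              = trace (complex_of_real (p k) \<cdot>\<^sub>m (kron_list (map (\<lambda>i. P i (\<sigma> i j)) [0..<m]) * kron_list (map (R k) [0..<m])))"
            using Kc[OF j] Rkc k by (subst mult_smult_distrib) auto
          also have "\<dots> = complex_of_real (p k) * trace (kron_list (map (\<lambda>i. P i (\<sigma> i j)) [0..<m]) * kron_list (map (R k) [0..<m]))"
            using Kc[OF j] Rkc k by (intro trace_smult[of _ Dn]) auto
          also have "trace (kron_list (map (\<lambda>i. P i (\<sigma> i j)) [0..<m]) * kron_list (map (R k) [0..<m]))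
              = prod_list (map (\<lambda>i. trace (P i (\<sigma> i j) * R k i)) [0..<m])"
            using k j by (intro trace_kron_list) (auto intro!: Pc \<sigma>r Rc)
          finally show "trace (kron_list (map (\<lambda>i. P i (\<sigma> i j)) [0..<m]) * (complex_of_real (p k) \<cdot>\<^sub>m kron_list (map (R k) [0..<m])))
              = complex_of_real (p k) * (\<Prod>i<m. trace (P i (\<sigma> i j) * R k i))"
            unfolding prod_list_upt0 .
        qed
        also have "\<dots> = (\<Sum>k<K. complex_of_real (p k) * complex_of_real (\<Prod>i<m. y k i j))"
        proof (intro sum.cong refl arg_cong2[where f="(*)"])
          fix k assume k: "k \<in> {..<K}"
          have "(\<Prod>i<m. trace (P i (\<sigma> i j) * R k i)) = (\<Prod>i<m. complex_of_real (y k i j))"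
          proof (intro prod.cong refl)
            fix i assume i: "i \<in> {..<m}"
            have "Im (trace (P i (\<sigma> i j) * R k i)) = 0" using facts[of k i] k i \<sigma>r[of i j] j by auto
            then show "trace (P i (\<sigma> i j) * R k i) = complex_of_real (y k i j)"
              unfolding y_def by (simp add: complex_eq_iff)
          qed
          then show "(\<Prod>i<m. trace (P i (\<sigma> i j) * R k i)) = complex_of_real (\<Prod>i<m. y k i j)" by simp
        qed
        also have "\<dots> = complex_of_real (\<Sum>k<K. p k * (\<Prod>i<m. y k i j))" by simp
        finally show ?thesis .
      qed
      have "(\<Sum>j<D. trace (kron_list (map (\<lambda>i. P i (\<sigma> i j)) [0..<m]) * \<rho>)) =
          (\<Sum>j<D. complex_of_real (\<Sum>k<K. p k * (\<Prod>i<m. y k i j)))"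
        by (intro sum.cong refl) (rule tj, simp)
      then have "v = Re (\<Sum>j<D. complex_of_real (\<Sum>k<K. p k * (\<Prod>i<m. y k i j)))"
        unfolding v by (rule arg_cong)
      then have "v = (\<Sum>j<D. \<Sum>k<K. p k * (\<Prod>i<m. y k i j))"
        by (simp only: of_real_sum[symmetric] Re_complex_of_real)
      also have "\<dots> = (\<Sum>k<K. p k * (\<Sum>j<D. \<Prod>i<m. y k i j))"
        by (subst sum.swap) (simp add: sum_distrib_left)
      also have "\<dots> \<le> (\<Sum>k<K. p k * (sqrt (c i0) * sqrt (c k0)))"
      proof (intro sum_mono mult_left_mono)
        fix k assume k: "k \<in> {..<K}"
        show "0 \<le> p k" using pnn k by auto
        have yb: "\<forall>i<m. \<forall>j<D. 0 \<le> y k i j \<and> y k i j \<le> 1"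
        proof (intro allI impI)
          fix i j assume i: "i < m" and j: "j < D"
          have f: "\<forall>\<alpha><d i ^ 2. 0 \<le> Re (trace (P i \<alpha> * R k i))" "(\<Sum>\<alpha><d i ^ 2. Re (trace (P i \<alpha> * R k i))) = 1"
            using facts[of k i] k i by auto
          have "Re (trace (P i (\<sigma> i j) * R k i)) \<le> (\<Sum>\<alpha><d i ^ 2. Re (trace (P i \<alpha> * R k i)))"
            using f(1) \<sigma>r[OF i j] by (intro member_le_sum) auto
          then show "0 \<le> y k i j \<and> y k i j \<le> 1" unfolding y_def using f \<sigma>r[OF i j] by auto
        qed
        have yc: "\<forall>i<m. (\<Sum>j<D. (y k i j)^2) \<le> c i"
        proof (intro allI impI)
          fix i assume i: "i < m"
          have "(\<Sum>j<D. (y k i j)^2) \<le> (\<Sum>\<alpha><d i ^ 2. (Re (trace (P i \<alpha> * R k i)))^2)"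
            unfolding y_def using \<sigma>i[OF i]
            by (intro sum_inj_le[where h="\<lambda>\<alpha>. (Re (trace (P i \<alpha> * R k i)))^2"]) (auto simp: PiE_iff)
          then show "(\<Sum>j<D. (y k i j)^2) \<le> c i" using facts[of k i] k i by auto
        qed
        show "(\<Sum>j<D. \<Prod>i<m. y k i j) \<le> sqrt (c i0) * sqrt (c k0)"
          by (rule sum_prod_bound[OF ik yb yc])
      qed
      also have "\<dots> = sqrt (c i0) * sqrt (c k0)" using psum by (simp add: sum_distrib_right[symmetric])
      finally show "v \<le> sqrt (c i0) * sqrt (c k0)" .
    qed
  qed
  show ?thesis
  proof (rule Min.boundedI)
    have "{sqrt ((a i * real (d i) ^ 2 + 1) / (real (d i) * (real (d i) + 1))) *
         sqrt ((a k * real (d k) ^ 2 + 1) / (real (d k) * (real (d k) + 1))) | i k. i < m \<and> k < m \<and> i \<noteq> k}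
        \<subseteq> (\<lambda>(i,k). sqrt (c i) * sqrt (c k)) ` ({..<m} \<times> {..<m})"
      unfolding c_def by auto
    then show "finite {sqrt ((a i * real (d i) ^ 2 + 1) / (real (d i) * (real (d i) + 1))) *
         sqrt ((a k * real (d k) ^ 2 + 1) / (real (d k) * (real (d k) + 1))) | i k. i < m \<and> k < m \<and> i \<noteq> k}"
      by (rule finite_subset) auto
    have "sqrt (c 0) * sqrt (c 1) \<in> {sqrt ((a i * real (d i) ^ 2 + 1) / (real (d i) * (real (d i) + 1))) *
         sqrt ((a k * real (d k) ^ 2 + 1) / (real (d k) * (real (d k) + 1))) | i k. i < m \<and> k < m \<and> i \<noteq> k}"
      unfolding c_def using assms(1) by (intro CollectI exI[of _ 0] exI[of _ 1]) auto
    then show "{sqrt ((a i * real (d i) ^ 2 + 1) / (real (d i) * (real (d i) + 1))) *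
         sqrt ((a k * real (d k) ^ 2 + 1) / (real (d k) * (real (d k) + 1))) | i k. i < m \<and> k < m \<and> i \<noteq> k} \<noteq> {}"
      by blast
  next
    fix v assume "v \<in> {sqrt ((a i * real (d i) ^ 2 + 1) / (real (d i) * (real (d i) + 1))) *
         sqrt ((a k * real (d k) ^ 2 + 1) / (real (d k) * (real (d k) + 1))) | i k. i < m \<and> k < m \<and> i \<noteq> k}"
    then obtain i k where "i < m" "k < m" "i \<noteq> k" "v = sqrt (c i) * sqrt (c k)" unfolding c_def by blast
    then show "J_val m d P \<rho> \<le> v" using bound by simp
  qed
qed


end
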